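(* Let $X_1,\ldots,X_n$ be non-empty sets and $S\subset X_1\times\cdots\times X_n$ be relatively full. Then every maximal good subset $M\subset S$ is full.
   Context: $\Pi_i$ denotes the canonical projection onto $X_i$. A subset $T$ is good if every complex-valued function $f$ on $T$ can be written as $f(x_1,\ldots,x_n)=u_1(x_1)+\cdots+u_n(x_n)$ on $T$ for suitable functions $u_i$ on $X_i$. $T$ is full if it is a maximal good subset of $\Pi_1T\times\cdots\times\Pi_nT$. A maximal good subset of $S$ is a good subset of $S$ not strictly contained in any other good subset of $S$. $U(S)$ denotes the set of functions $f$ on $S$ for which there exist functions $u_i$ on $\Pi_iS$ with $f=u_1+\cdots+u_n$ on $S$. The set $S$ is relatively full if there exist $x_i^0\in\Pi_iS$, $1\le i\le n-1$, such that every $f\in U(S)$ has a unique representation $f=u_1+\cdots+u_n$ on $S$ (with $u_i$ functions on $\Pi_iS$) once the values $u_i(x_i^0)$, $1\le i\le n-1$, are prescribed. *)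

theory Defs
  imports Complex_Main "HOL-Library.FuncSet"
begin

text \<open>Points of X_1 x ... x X_n are extensional functions on the index set {..<n}
  (indices 0..n-1), elements of PiE {..<n} X.\<close>

definition proj :: "nat \<Rightarrow> (nat \<Rightarrow> 'a) set \<Rightarrow> 'a set" where
  "proj i T = (\<lambda>x. x i) ` T"

definition represents :: "nat \<Rightarrow> (nat \<Rightarrow> 'a \<Rightarrow> complex) \<Rightarrow> ((nat \<Rightarrow> 'a) \<Rightarrow> complex) \<Rightarrow> (nat \<Rightarrow> 'a) set \<Rightarrow> bool" where
  "represents n u f T \<longleftrightarrow> (\<forall>x\<in>T. f x = (\<Sum>i<n. u i (x i)))"

definition good :: "nat \<Rightarrow> (nat \<Rightarrow> 'a) set \<Rightarrow> bool" where
  "good n T \<longleftrightarrow> (\<forall>f :: (nat \<Rightarrow> 'a) \<Rightarrow> complex. \<exists>u. represents n u f T)"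

definition maximal_good :: "nat \<Rightarrow> (nat \<Rightarrow> 'a) set \<Rightarrow> (nat \<Rightarrow> 'a) set \<Rightarrow> bool" where
  "maximal_good n S M \<longleftrightarrow> M \<subseteq> S \<and> good n M \<and>
     (\<forall>M'. M \<subseteq> M' \<and> M' \<subseteq> S \<and> good n M' \<longrightarrow> M' = M)"

definition full :: "nat \<Rightarrow> (nat \<Rightarrow> 'a) set \<Rightarrow> bool" where
  "full n T \<longleftrightarrow> maximal_good n (PiE {..<n} (\<lambda>i. proj i T)) T"

definition U :: "nat \<Rightarrow> (nat \<Rightarrow> 'a) set \<Rightarrow> ((nat \<Rightarrow> 'a) \<Rightarrow> complex) set" where
  "U n S = {f. \<exists>u. represents n u f S}"

definition relatively_full :: "nat \<Rightarrow> (nat \<Rightarrow> 'a) set \<Rightarrow> bool" where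
  "relatively_full n S \<longleftrightarrow> (\<exists>x0. (\<forall>i<n-1. x0 i \<in> proj i S) \<and>
     (\<forall>f\<in>U n S. \<forall>u v. represents n u f S \<and> represents n v f S \<and>
        (\<forall>i<n-1. u i (x0 i) = v i (x0 i)) \<longrightarrow>
        (\<forall>i<n. \<forall>y\<in>proj i S. u i y = v i y)))"

end

theory Submission
  imports Defs
begin

lemma kernel_ext:
  fixes M :: "(nat \<Rightarrow> 'a) set" and u :: "nat \<Rightarrow> 'a \<Rightarrow> complex"
  assumes g: "good n M" and ng: "\<not> good n (insert s M)"
    and u: "\<forall>x\<in>M. (\<Sum>i<n. u i (x i)) = 0"
  shows "(\<Sum>i<n. u i (s i)) = 0"
proof (rule ccontr)
  assume a: "(\<Sum>i<n. u i (s i)) \<noteq> 0"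
  define a where "a = (\<Sum>i<n. u i (s i))"
  have "good n (insert s M)"
    unfolding good_def
  proof
    fix f :: "(nat \<Rightarrow> 'a) \<Rightarrow> complex"
    obtain w where w: "represents n w f M" using g unfolding good_def by blast
    define t where "t = (f s - (\<Sum>i<n. w i (s i))) / a"
    define w' where "w' = (\<lambda>i z. w i z + t * u i z)"
    have "\<And>x. (\<Sum>i<n. w' i (x i)) = (\<Sum>i<n. w i (x i)) + t * (\<Sum>i<n. u i (x i))"
      unfolding w'_def by (simp add: sum.distrib sum_distrib_left)
    hence "represents n w' f (insert s M)"
      using w u a unfolding represents_def t_def a_def by auto
    thus "\<exists>u. represents n u f (insert s M)" by blast
  qed
  thus False using ng by blast
qed

theorem theorem5:
  fixes n :: nat and X :: "nat \<Rightarrow> 'a set" and S M :: "(nat \<Rightarrow> 'a) set"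
  assumes "\<forall>i<n. X i \<noteq> {}"
    and "S \<subseteq> PiE {..<n} X"
    and "relatively_full n S"
    and "maximal_good n S M"
  shows "full n M"
proof -
  have MS: "M \<subseteq> S" and gM: "good n M"
    and mx: "\<And>M'. M \<subseteq> M' \<Longrightarrow> M' \<subseteq> S \<Longrightarrow> good n M' \<Longrightarrow> M' = M"
    using assms(4) unfolding maximal_good_def by blast+
  obtain x0 where x0: "\<forall>i<n-1. x0 i \<in> proj i S"
    and rf: "\<forall>f\<in>U n S. \<forall>u v. represents n u f S \<and> represents n v f S \<and>
        (\<forall>i<n-1. u i (x0 i) = v i (x0 i)) \<longrightarrow>
        (\<forall>i<n. \<forall>y\<in>proj i S. u i y = v i y)"
    using assms(3) unfolding relatively_full_def by blast
  have KS: "\<forall>x\<in>S. (\<Sum>i<n. u i (x i)) = 0" if uM: "\<forall>x\<in>M. (\<Sum>i<n. u i (x i)) = 0" for u :: "nat \<Rightarrow> 'a \<Rightarrow> complex"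
  proof
    fix s assume s: "s \<in> S"
    show "(\<Sum>i<n. u i (s i)) = 0"
    proof (cases "s \<in> M")
      case True thus ?thesis using uM by blast
    next
      case False
      have "\<not> good n (insert s M)"
        using mx[of "insert s M"] False s MS by blast
      thus ?thesis using kernel_ext[of n M s u] gM uM by blast
    qed
  qed
  define P where "P = PiE {..<n} (\<lambda>i. proj i M)"
  have MP: "M \<subseteq> P"
  proof
    fix x assume x: "x \<in> M"
    hence "x \<in> PiE {..<n} X" using MS assms(2) by blast
    thus "x \<in> P" unfolding P_def proj_def using x by (auto simp: PiE_iff)
  qed
  have "M' = M" if h: "M \<subseteq> M'" "M' \<subseteq> P" "good n M'" for M'
  proof (rule ccontr)
    assume "M' \<noteq> M"
    then obtain y where y: "y \<in> M'" "y \<notin> M" using h by blast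
    define f :: "(nat \<Rightarrow> 'a) \<Rightarrow> complex" where "f = (\<lambda>x. if x = y then 1 else 0)"
    obtain u where u: "represents n u f M'" using h(3) unfolding good_def by blast
    have uM: "\<forall>x\<in>M. (\<Sum>i<n. u i (x i)) = 0"
    proof
      fix x assume x: "x \<in> M"
      hence "x \<in> M'" "x \<noteq> y" using h(1) y by auto
      thus "(\<Sum>i<n. u i (x i)) = 0" using u unfolding represents_def f_def by force
    qed
    have uy: "(\<Sum>i<n. u i (y i)) = 1" using u y unfolding represents_def f_def by auto
    have uS: "\<forall>x\<in>S. (\<Sum>i<n. u i (x i)) = 0" using KS[OF uM] .
    show False
    proof (cases n)
      case 0 thus False using uy by simp
    next
      case (Suc m)
      define c where "c = (\<lambda>i. if i < m then u i (x0 i) else - (\<Sum>j<m. u j (x0 j)))"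
      have csum: "(\<Sum>i<n. c i) = 0" unfolding c_def Suc by simp
      define v where "v = (\<lambda>i z. u i z - c i)"
      have vsum: "\<And>x. (\<Sum>i<n. v i (x i)) = (\<Sum>i<n. u i (x i))"
        unfolding v_def using csum by (simp add: sum_subtractf)
      have vS: "represents n v (\<lambda>_. 0) S" using uS vsum unfolding represents_def by simp
      have zS: "represents n (\<lambda>_ _. 0) (\<lambda>_. 0) S" unfolding represents_def by simp
      have "(\<lambda>_. 0) \<in> U n S" using zS unfolding U_def by blast
      moreover have "\<forall>i<n-1. v i (x0 i) = 0" unfolding v_def c_def Suc by simp
      ultimately have v0: "\<forall>i<n. \<forall>z\<in>proj i S. v i z = 0"
        using rf vS zS by blast
      have "\<forall>i<n. y i \<in> proj i M"
        using h(2) y(1) unfolding P_def by (auto simp: PiE_iff)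
      moreover have "\<And>i. proj i M \<subseteq> proj i S" using MS unfolding proj_def by blast
      ultimately have "\<forall>i<n. y i \<in> proj i S" by blast
      hence "(\<Sum>i<n. v i (y i)) = 0" using v0 by simp
      thus False using vsum uy by simp
    qed
  qed
  thus ?thesis unfolding full_def maximal_good_def P_def[symmetric] using MP gM by blast
qed

end
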